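(* Let $H_0, H_1, \ldots, H_{n-1}$ be a sort signature, i.e.\ a list in which each $H_i$ is a functor $H_i : \mathcal{C}_i \Rightarrow \mathsf{Set}$, where $\mathcal{C}_0$ is the terminal category and $\mathcal{C}_{i+1}$ is obtained from $\mathcal{C}_i$ and $H_i$ as described in the context. Then the base category $\mathcal{C}_n$ has all small limits.
   Context: The ambient framework is Martin-Löf type theory with function extensionality; $\mathsf{Set}$ denotes a universe of types satisfying uniqueness of identity proofs (sets), and also the category of sets and functions. Categories are precategories in the sense of the HoTT book. Given a category $\mathcal{C}_i$ and a functor $H_i : \mathcal{C}_i \Rightarrow \mathsf{Set}$, the category $\mathcal{C}_{i+1}$ has as objects pairs $(X,P)$ with $X$ an object of $\mathcal{C}_i$ and $P : H_i(X) \to \mathsf{Set}$ a family of sets; a morphism $(f,g) : (X,P) \to (Y,Q)$ consists of a morphism $f : X \to Y$ in $\mathcal{C}_i$ and a dependent function $g : (x : H_i(X)) \to P(x) \to Q(H_i(f)\,x)$. The category $\mathcal{C}_0$ is the terminal category (one object, one morphism). $\mathcal{C}_n$ is called the base category of the signature. A small limit is a limit of a diagram $D : \mathcal{I} \to \mathcal{C}$ whose shape category $\mathcal{I}$ has a set of objects and hom-sets that are sets. *)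

theory Defs
  imports "HOL-Library.FuncSet"
begin

(* Precategories with typed (object-indexed) identities and composition.
   Comp C x y z g f is  g \<circ> f  for f : x \<rightarrow> y, g : y \<rightarrow> z. *)
record ('o, 'm) cat =
  Obj  :: "'o set"
  Hom  :: "'o \<Rightarrow> 'o \<Rightarrow> 'm set"
  Id   :: "'o \<Rightarrow> 'm"
  Comp :: "'o \<Rightarrow> 'o \<Rightarrow> 'o \<Rightarrow> 'm \<Rightarrow> 'm \<Rightarrow> 'm"

definition category :: "('o, 'm, 'z) cat_scheme \<Rightarrow> bool" where
  "category C \<longleftrightarrow>
     (\<forall>x\<in>Obj C. Id C x \<in> Hom C x x) \<and>
     (\<forall>x\<in>Obj C. \<forall>y\<in>Obj C. \<forall>z\<in>Obj C. \<forall>f\<in>Hom C x y. \<forall>g\<in>Hom C y z.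
         Comp C x y z g f \<in> Hom C x z) \<and>
     (\<forall>x\<in>Obj C. \<forall>y\<in>Obj C. \<forall>f\<in>Hom C x y.
         Comp C x y y (Id C y) f = f \<and> Comp C x x y f (Id C x) = f) \<and>
     (\<forall>w\<in>Obj C. \<forall>x\<in>Obj C. \<forall>y\<in>Obj C. \<forall>z\<in>Obj C.
        \<forall>f\<in>Hom C w x. \<forall>g\<in>Hom C x y. \<forall>h\<in>Hom C y z.
         Comp C w y z h (Comp C w x y g f) = Comp C w x z (Comp C x y z h g) f)"

record ('o, 'm, 'o2, 'm2) fctr =
  FO :: "'o \<Rightarrow> 'o2"
  FM :: "'o \<Rightarrow> 'o \<Rightarrow> 'm \<Rightarrow> 'm2"

definition is_functor ::
  "('o, 'm) cat \<Rightarrow> ('o2, 'm2) cat \<Rightarrow> ('o, 'm, 'o2, 'm2) fctr \<Rightarrow> bool" where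
  "is_functor C D F \<longleftrightarrow> category C \<and> category D \<and>
     (\<forall>x\<in>Obj C. FO F x \<in> Obj D) \<and>
     (\<forall>x\<in>Obj C. \<forall>y\<in>Obj C. \<forall>f\<in>Hom C x y. FM F x y f \<in> Hom D (FO F x) (FO F y)) \<and>
     (\<forall>x\<in>Obj C. FM F x x (Id C x) = Id D (FO F x)) \<and>
     (\<forall>x\<in>Obj C. \<forall>y\<in>Obj C. \<forall>z\<in>Obj C. \<forall>f\<in>Hom C x y. \<forall>g\<in>Hom C y z.
        FM F x z (Comp C x y z g f) = Comp D (FO F x) (FO F y) (FO F z) (FM F y z g) (FM F x y f))"

definition SetCat :: "('u set, 'u \<Rightarrow> 'u) cat" where
  "SetCat = \<lparr> Obj = UNIV,
              Hom = (\<lambda>X Y. PiE X (\<lambda>_. Y)),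
              Id = (\<lambda>X. restrict (\<lambda>x. x) X),
              Comp = (\<lambda>X Y Z g f. restrict (g \<circ> f) X) \<rparr>"

(* Objects of C_i: lists [P_{i-1}, ..., P_0] (last-added family first);
   morphisms: lists [g_{i-1}, ..., g_0]. *)
type_synonym 'u sobj = "('u \<Rightarrow> 'u set) list"
type_synonym 'u smor = "('u \<Rightarrow> 'u \<Rightarrow> 'u) list"
type_synonym 'u scat = "('u sobj, 'u smor) cat"
type_synonym 'u sfun = "('u sobj, 'u smor, 'u set, 'u \<Rightarrow> 'u) fctr"

definition terminal_cat :: "'u scat" where
  "terminal_cat = \<lparr> Obj = {[]}, Hom = (\<lambda>_ _. {[]}), Id = (\<lambda>_. []),
                    Comp = (\<lambda>_ _ _ _ _. []) \<rparr>"

(* Object (X,P) is encoded as P # X, morphism (f,g) as g # f.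
   P is a family of sets over H(X) (empty outside H(X)); g is a dependent function,
   extensional (undefined outside its domain). *)
definition ext_cat :: "'u scat \<Rightarrow> 'u sfun \<Rightarrow> 'u scat" where
  "ext_cat C H = \<lparr>
     Obj = {P # X | P X. X \<in> Obj C \<and> (\<forall>x. x \<notin> FO H X \<longrightarrow> P x = {})},
     Hom = (\<lambda>A B. {g # f | g f. f \<in> Hom C (tl A) (tl B) \<and>
              (\<forall>x\<in>FO H (tl A). \<forall>p\<in>hd A x. g x p \<in> hd B (FM H (tl A) (tl B) f x)) \<and>
              (\<forall>x p. \<not> (x \<in> FO H (tl A) \<and> p \<in> hd A x) \<longrightarrow> g x p = undefined)}),
     Id = (\<lambda>A. (\<lambda>x p. if x \<in> FO H (tl A) \<and> p \<in> hd A x then p else undefined) # Id C (tl A)),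
     Comp = (\<lambda>A B D gs fs.
        (\<lambda>x p. if x \<in> FO H (tl A) \<and> p \<in> hd A x
               then hd gs (FM H (tl A) (tl B) (tl fs) x) (hd fs x p) else undefined)
        # Comp C (tl A) (tl B) (tl D) (tl gs) (tl fs)) \<rparr>"

definition tower :: "'u sfun list \<Rightarrow> 'u scat" where
  "tower Hs = foldl ext_cat terminal_cat Hs"

definition sort_signature :: "'u sfun list \<Rightarrow> bool" where
  "sort_signature Hs \<longleftrightarrow>
     (\<forall>i<length Hs. is_functor (tower (take i Hs)) SetCat (Hs ! i))"

definition is_cone ::
  "('i, 'j) cat \<Rightarrow> ('o, 'm) cat \<Rightarrow> ('i, 'j, 'o, 'm) fctr \<Rightarrow> 'o \<Rightarrow> ('i \<Rightarrow> 'm) \<Rightarrow> bool" where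
  "is_cone I C D c \<pi> \<longleftrightarrow> c \<in> Obj C \<and>
     (\<forall>i\<in>Obj I. \<pi> i \<in> Hom C c (FO D i)) \<and>
     (\<forall>i\<in>Obj I. \<forall>j\<in>Obj I. \<forall>u\<in>Hom I i j.
        Comp C c (FO D i) (FO D j) (FM D i j u) (\<pi> i) = \<pi> j)"

definition is_limit ::
  "('i, 'j) cat \<Rightarrow> ('o, 'm) cat \<Rightarrow> ('i, 'j, 'o, 'm) fctr \<Rightarrow> 'o \<Rightarrow> ('i \<Rightarrow> 'm) \<Rightarrow> bool" where
  "is_limit I C D c \<pi> \<longleftrightarrow> is_cone I C D c \<pi> \<and>
     (\<forall>c' \<pi>'. is_cone I C D c' \<pi>' \<longrightarrow>
        (\<exists>!h. h \<in> Hom C c' c \<and> (\<forall>i\<in>Obj I. Comp C c' c (FO D i) (\<pi> i) h = \<pi>' i)))"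

definition has_limits_of_shape :: "('i, 'j) cat \<Rightarrow> ('o, 'm) cat \<Rightarrow> bool" where
  "has_limits_of_shape I C \<longleftrightarrow>
     (\<forall>D. is_functor I C D \<longrightarrow> (\<exists>c \<pi>. is_limit I C D c \<pi>))"

end

theory Submission
  imports Defs
begin

lemma tower_snoc: "tower (Hs @ [H]) = ext_cat (tower Hs) H"
  by (simp add: tower_def)

lemma sig_snoc:
  assumes "sort_signature (Hs @ [H])"
  shows "sort_signature Hs" "is_functor (tower Hs) SetCat H"
proof -
  show "sort_signature Hs" unfolding sort_signature_def
  proof (intro allI impI)
    fix i assume "i < length Hs"
    then have "is_functor (tower (take i (Hs@[H]))) SetCat ((Hs@[H]) ! i)"
      using assms unfolding sort_signature_def by simp
    then show "is_functor (tower (take i Hs)) SetCat (Hs ! i)"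
      using \<open>i < length Hs\<close> by (simp add: nth_append)
  qed
  have "is_functor (tower (take (length Hs) (Hs@[H]))) SetCat ((Hs@[H]) ! length Hs)"
    using assms[unfolded sort_signature_def, rule_format, of "length Hs"] by simp
  then show "is_functor (tower Hs) SetCat H" by simp
qed

lemma base_limits: "has_limits_of_shape I terminal_cat"
  unfolding has_limits_of_shape_def
proof (intro allI impI)
  fix D :: "('a,'b,'u sobj,'u smor) fctr"
  have "is_limit I terminal_cat D [] (\<lambda>_. [])"
    unfolding is_limit_def is_cone_def terminal_cat_def by auto
  then show "\<exists>c \<pi>. is_limit I terminal_cat D c \<pi>" by blast
qed

lemma ext_Obj: "A \<in> Obj (ext_cat C H) \<longleftrightarrow> A \<noteq> [] \<and> tl A \<in> Obj C \<and> (\<forall>x. x \<notin> FO H (tl A) \<longrightarrow> hd A x = {})"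
  unfolding ext_cat_def by (cases A) auto

lemma ext_Hom: "f \<in> Hom (ext_cat C H) A B \<longleftrightarrow> f \<noteq> [] \<and> tl f \<in> Hom C (tl A) (tl B) \<and>
   (\<forall>x\<in>FO H (tl A). \<forall>p\<in>hd A x. hd f x p \<in> hd B (FM H (tl A) (tl B) (tl f) x)) \<and>
   (\<forall>x p. \<not> (x \<in> FO H (tl A) \<and> p \<in> hd A x) \<longrightarrow> hd f x p = undefined)"
  unfolding ext_cat_def by (cases f) auto

lemma ext_Id: "Id (ext_cat C H) A = (\<lambda>x p. if x \<in> FO H (tl A) \<and> p \<in> hd A x then p else undefined) # Id C (tl A)"
  unfolding ext_cat_def by simp

lemma ext_Comp: "Comp (ext_cat C H) A B D gs fs = (\<lambda>x p. if x \<in> FO H (tl A) \<and> p \<in> hd A x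
               then hd gs (FM H (tl A) (tl B) (tl fs) x) (hd fs x p) else undefined)
        # Comp C (tl A) (tl B) (tl D) (tl gs) (tl fs)"
  unfolding ext_cat_def by simp

lemma SetCat_simps: "Hom SetCat X Y = PiE X (\<lambda>_. Y)" "Id SetCat X = restrict (\<lambda>x. x) X"
  "Comp SetCat X Y Z g f = restrict (g \<circ> f) X"
  unfolding SetCat_def by simp_all

lemma step:
  fixes C :: "'u scat" and H :: "'u sfun" and I :: "('i,'j) cat" and e :: "('i \<Rightarrow> 'u) \<Rightarrow> 'u"
  assumes FH: "is_functor C SetCat H" and lims: "has_limits_of_shape I C" and inje: "inj e"
  shows "has_limits_of_shape I (ext_cat C H)"
  unfolding has_limits_of_shape_def
proof (intro allI impI)
  fix D :: "('i,'j,'u sobj,'u smor) fctr"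
  assume FD: "is_functor I (ext_cat C H) D"
  have catC: "category C" using FH by (simp add: is_functor_def)
  define D' :: "('i,'j,'u sobj,'u smor) fctr" where "D' = \<lparr>FO = \<lambda>i. tl (FO D i), FM = \<lambda>i j u. tl (FM D i j u)\<rparr>"
  have DO: "\<And>i. i \<in> Obj I \<Longrightarrow> FO D i \<in> Obj (ext_cat C H)" using FD by (simp add: is_functor_def)
  have DM: "\<And>i j u. i \<in> Obj I \<Longrightarrow> j \<in> Obj I \<Longrightarrow> u \<in> Hom I i j \<Longrightarrow> FM D i j u \<in> Hom (ext_cat C H) (FO D i) (FO D j)"
    using FD by (simp add: is_functor_def)
  have FD': "is_functor I C D'"
    using FD catC unfolding is_functor_def D'_def by (simp add: ext_Obj ext_Hom ext_Id ext_Comp)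
  obtain L \<pi>' where lim: "is_limit I C D' L \<pi>'"
    using lims FD' unfolding has_limits_of_shape_def by blast
  have LO: "L \<in> Obj C" and \<pi>'H: "\<And>i. i \<in> Obj I \<Longrightarrow> \<pi>' i \<in> Hom C L (tl (FO D i))"
    and \<pi>'C: "\<And>i j u. i \<in> Obj I \<Longrightarrow> j \<in> Obj I \<Longrightarrow> u \<in> Hom I i j \<Longrightarrow>
        Comp C L (tl (FO D i)) (tl (FO D j)) (tl (FM D i j u)) (\<pi>' i) = \<pi>' j"
    using lim unfolding is_limit_def is_cone_def D'_def by auto
  define Q where "Q x = (if x \<in> FO H L then e ` {p \<in> PiE (Obj I) (\<lambda>i. hd (FO D i) (FM H L (tl (FO D i)) (\<pi>' i) x)).
     \<forall>i\<in>Obj I. \<forall>j\<in>Obj I. \<forall>u\<in>Hom I i j. hd (FM D i j u) (FM H L (tl (FO D i)) (\<pi>' i) x) (p i) = p j} else {})" for x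
  define \<pi> where "\<pi> i = (\<lambda>x q. if x \<in> FO H L \<and> q \<in> Q x then inv e q i else undefined) # \<pi>' i" for i
  have Qe: "\<exists>p. q = e p \<and> p \<in> PiE (Obj I) (\<lambda>i. hd (FO D i) (FM H L (tl (FO D i)) (\<pi>' i) x)) \<and>
     (\<forall>i\<in>Obj I. \<forall>j\<in>Obj I. \<forall>u\<in>Hom I i j. hd (FM D i j u) (FM H L (tl (FO D i)) (\<pi>' i) x) (p i) = p j)"
    if "x \<in> FO H L" "q \<in> Q x" for x q
    using that unfolding Q_def by auto
  have cone: "is_cone I (ext_cat C H) D (Q # L) \<pi>"
    unfolding is_cone_def
  proof (intro conjI ballI)
    show "Q # L \<in> Obj (ext_cat C H)" using LO by (simp add: ext_Obj Q_def)
  next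
    fix i assume i: "i \<in> Obj I"
    show "\<pi> i \<in> Hom (ext_cat C H) (Q # L) (FO D i)"
      unfolding ext_Hom
    proof (intro conjI ballI allI impI)
      fix x q assume x: "x \<in> FO H (tl (Q # L))" and q: "q \<in> hd (Q # L) x"
      then obtain p where "q = e p" "p \<in> PiE (Obj I) (\<lambda>i. hd (FO D i) (FM H L (tl (FO D i)) (\<pi>' i) x))"
        using Qe[of x q] by auto
      then show "hd (\<pi> i) x q \<in> hd (FO D i) (FM H (tl (Q # L)) (tl (FO D i)) (tl (\<pi> i)) x)"
        using x q i inje by (auto simp: \<pi>_def)
    qed (use i \<pi>'H in \<open>auto simp: \<pi>_def\<close>)
  next
    fix i j u assume i: "i \<in> Obj I" and j: "j \<in> Obj I" and u: "u \<in> Hom I i j"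
    show "Comp (ext_cat C H) (Q # L) (FO D i) (FO D j) (FM D i j u) (\<pi> i) = \<pi> j"
    proof -
      have hd_eq: "(\<lambda>x q. if x \<in> FO H L \<and> q \<in> Q x then hd (FM D i j u) (FM H L (tl (FO D i)) (\<pi>' i) x) (inv e q i) else undefined) =
           (\<lambda>x q. if x \<in> FO H L \<and> q \<in> Q x then inv e q j else undefined)"
      proof (intro ext)
        fix x q
        show "(if x \<in> FO H L \<and> q \<in> Q x then hd (FM D i j u) (FM H L (tl (FO D i)) (\<pi>' i) x) (inv e q i) else undefined) =
           (if x \<in> FO H L \<and> q \<in> Q x then inv e q j else undefined)"
        proof (cases "x \<in> FO H L \<and> q \<in> Q x")
          case True
          then obtain p where "q = e p" "\<forall>i\<in>Obj I. \<forall>j\<in>Obj I. \<forall>u\<in>Hom I i j. hd (FM D i j u) (FM H L (tl (FO D i)) (\<pi>' i) x) (p i) = p j"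
            using Qe[of x q] by auto
          then show ?thesis using True i j u inje by simp
        next
          case False then show ?thesis by (simp only: if_False)
        qed
      qed
      have "(\<lambda>x p. if x \<in> FO H L \<and> p \<in> Q x then hd (FM D i j u) (FM H L (tl (FO D i)) (\<pi>' i) x)
               (if x \<in> FO H L \<and> p \<in> Q x then inv e p i else undefined) else undefined)
         = (\<lambda>x q. if x \<in> FO H L \<and> q \<in> Q x then hd (FM D i j u) (FM H L (tl (FO D i)) (\<pi>' i) x) (inv e q i) else undefined)"
        by (intro ext) simp
      then show ?thesis unfolding ext_Comp \<pi>_def list.sel using hd_eq by (simp add: \<pi>'C[OF i j u])
    qed
  qed
  have univ: "\<exists>!h. h \<in> Hom (ext_cat C H) c' (Q # L) \<and> (\<forall>i\<in>Obj I. Comp (ext_cat C H) c' (Q # L) (FO D i) (\<pi> i) h = \<sigma> i)"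
    if cc: "is_cone I (ext_cat C H) D c' \<sigma>" for c' \<sigma>
  proof -
    define X' where "X' = tl c'"
    define P' where "P' = hd c'"
    have c'O: "c' \<in> Obj (ext_cat C H)" using cc by (simp add: is_cone_def)
    have X'O: "X' \<in> Obj C" and P'e: "\<And>x. x \<notin> FO H X' \<Longrightarrow> P' x = {}" and c'eq: "c' = P' # X'"
      using c'O unfolding ext_Obj X'_def P'_def by auto
    have \<sigma>H: "\<sigma> i \<in> Hom (ext_cat C H) c' (FO D i)" if "i \<in> Obj I" for i
      using cc that by (simp add: is_cone_def)
    have \<sigma>C: "Comp (ext_cat C H) c' (FO D i) (FO D j) (FM D i j u) (\<sigma> i) = \<sigma> j"
      if "i \<in> Obj I" "j \<in> Obj I" "u \<in> Hom I i j" for i j u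
      using cc that by (simp add: is_cone_def)
    have \<sigma>tl: "tl (\<sigma> i) \<in> Hom C X' (tl (FO D i))" and \<sigma>ne: "\<sigma> i \<noteq> []"
      and \<sigma>hd: "\<And>x p. x \<in> FO H X' \<Longrightarrow> p \<in> P' x \<Longrightarrow> hd (\<sigma> i) x p \<in> hd (FO D i) (FM H X' (tl (FO D i)) (tl (\<sigma> i)) x)"
      and \<sigma>ext: "\<And>x p. \<not> (x \<in> FO H X' \<and> p \<in> P' x) \<Longrightarrow> hd (\<sigma> i) x p = undefined"
      if "i \<in> Obj I" for i
      using \<sigma>H[OF that] unfolding ext_Hom X'_def P'_def by auto
    have lcone: "is_cone I C D' X' (\<lambda>i. tl (\<sigma> i))"
      unfolding is_cone_def
    proof (intro conjI ballI)
      show "X' \<in> Obj C" by (rule X'O)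
    next
      fix i assume "i \<in> Obj I" then show "tl (\<sigma> i) \<in> Hom C X' (FO D' i)" using \<sigma>tl by (simp add: D'_def)
    next
      fix i j u assume "i \<in> Obj I" "j \<in> Obj I" "u \<in> Hom I i j"
      from arg_cong[OF \<sigma>C[OF this], of tl]
      show "Comp C X' (FO D' i) (FO D' j) (FM D' i j u) (tl (\<sigma> i)) = tl (\<sigma> j)"
        by (simp add: ext_Comp D'_def X'_def)
    qed
    then obtain h' where h'H: "h' \<in> Hom C X' L" and h'C: "\<And>i. i \<in> Obj I \<Longrightarrow> Comp C X' L (tl (FO D i)) (\<pi>' i) h' = tl (\<sigma> i)"
      and h'u: "\<And>f. f \<in> Hom C X' L \<Longrightarrow> (\<forall>i\<in>Obj I. Comp C X' L (tl (FO D i)) (\<pi>' i) f = tl (\<sigma> i)) \<Longrightarrow> f = h'"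
    proof -
      have "\<exists>!h. h \<in> Hom C X' L \<and> (\<forall>i\<in>Obj I. Comp C X' L (FO D' i) (\<pi>' i) h = tl (\<sigma> i))"
        using lim lcone unfolding is_limit_def by blast
      then have "\<exists>!h. h \<in> Hom C X' L \<and> (\<forall>i\<in>Obj I. Comp C X' L (tl (FO D i)) (\<pi>' i) h = tl (\<sigma> i))"
        by (simp add: D'_def)
      then obtain h0 where h0: "h0 \<in> Hom C X' L" "\<forall>i\<in>Obj I. Comp C X' L (tl (FO D i)) (\<pi>' i) h0 = tl (\<sigma> i)"
        and u: "\<And>y. y \<in> Hom C X' L \<Longrightarrow> \<forall>i\<in>Obj I. Comp C X' L (tl (FO D i)) (\<pi>' i) y = tl (\<sigma> i) \<Longrightarrow> y = h0"
        by (elim ex1E) blast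
      show ?thesis by (rule that[OF h0(1)]) (use h0(2) u in auto)
    qed
    have FMh': "FM H X' L h' x \<in> FO H L" if "x \<in> FO H X'" for x
      using FH h'H X'O LO that unfolding is_functor_def SetCat_simps by blast
    have keyFM: "FM H X' (tl (FO D i)) (tl (\<sigma> i)) x = FM H L (tl (FO D i)) (\<pi>' i) (FM H X' L h' x)"
      if i: "i \<in> Obj I" and x: "x \<in> FO H X'" for i x
    proof -
      have DiO: "tl (FO D i) \<in> Obj C" using DO[OF i] by (simp add: ext_Obj)
      have "FM H X' (tl (FO D i)) (Comp C X' L (tl (FO D i)) (\<pi>' i) h') =
         Comp SetCat (FO H X') (FO H L) (FO H (tl (FO D i))) (FM H L (tl (FO D i)) (\<pi>' i)) (FM H X' L h')"
        using FH X'O LO DiO h'H \<pi>'H[OF i] unfolding is_functor_def by blast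
      then show ?thesis using h'C[OF i] x by (simp add: SetCat_simps)
    qed
    define g where "g x p = (if x \<in> FO H X' \<and> p \<in> P' x then e (\<lambda>i\<in>Obj I. hd (\<sigma> i) x p) else undefined)" for x p
    have gQ: "g x p \<in> Q (FM H X' L h' x)" if x: "x \<in> FO H X'" and p: "p \<in> P' x" for x p
    proof -
      have "(\<lambda>i\<in>Obj I. hd (\<sigma> i) x p) \<in> PiE (Obj I) (\<lambda>i. hd (FO D i) (FM H L (tl (FO D i)) (\<pi>' i) (FM H X' L h' x)))"
        using \<sigma>hd[OF _ x p] keyFM[OF _ x] by auto
      moreover have "\<forall>i\<in>Obj I. \<forall>j\<in>Obj I. \<forall>u\<in>Hom I i j. hd (FM D i j u) (FM H L (tl (FO D i)) (\<pi>' i) (FM H X' L h' x)) ((\<lambda>i\<in>Obj I. hd (\<sigma> i) x p) i) = (\<lambda>i\<in>Obj I. hd (\<sigma> i) x p) j"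
      proof (intro ballI)
        fix i j u assume i: "i \<in> Obj I" and j: "j \<in> Obj I" and u: "u \<in> Hom I i j"
        have "hd (Comp (ext_cat C H) c' (FO D i) (FO D j) (FM D i j u) (\<sigma> i)) x p = hd (\<sigma> j) x p"
          using \<sigma>C[OF i j u] by simp
        then show "hd (FM D i j u) (FM H L (tl (FO D i)) (\<pi>' i) (FM H X' L h' x)) ((\<lambda>i\<in>Obj I. hd (\<sigma> i) x p) i) = (\<lambda>i\<in>Obj I. hd (\<sigma> i) x p) j"
          using i j x p keyFM[OF i x] unfolding ext_Comp by (simp add: c'eq)
      qed
      ultimately show ?thesis using FMh'[OF x] x p unfolding Q_def g_def by auto
    qed
    define h where "h = g # h'"
    have hH: "h \<in> Hom (ext_cat C H) c' (Q # L)"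
      unfolding ext_Hom h_def using h'H gQ by (auto simp: c'eq g_def)
    have comm: "Comp (ext_cat C H) c' (Q # L) (FO D i) (\<pi> i) f = \<sigma> i \<longleftrightarrow> 
         (\<lambda>x p. if x \<in> FO H X' \<and> p \<in> P' x then hd (\<pi> i) (FM H X' L (tl f) x) (hd f x p) else undefined) = hd (\<sigma> i)
         \<and> Comp C X' L (tl (FO D i)) (\<pi>' i) (tl f) = tl (\<sigma> i)" if i: "i \<in> Obj I" for i f
    proof -
      obtain a b where ab: "\<sigma> i = a # b" using \<sigma>ne[OF i] by (cases "\<sigma> i") auto
      have tp: "tl (\<pi> i) = \<pi>' i" by (simp add: \<pi>_def)
      show ?thesis unfolding ext_Comp ab c'eq list.sel tp list.inject by (rule refl)
    qed
    have hC: "\<forall>i\<in>Obj I. Comp (ext_cat C H) c' (Q # L) (FO D i) (\<pi> i) h = \<sigma> i"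
    proof
      fix i assume i: "i \<in> Obj I"
      have hh: "(\<lambda>x p. if x \<in> FO H X' \<and> p \<in> P' x then hd (\<pi> i) (FM H X' L h' x) (g x p) else undefined) = hd (\<sigma> i)"
      proof (intro ext)
        fix x p
        show "(if x \<in> FO H X' \<and> p \<in> P' x then hd (\<pi> i) (FM H X' L h' x) (g x p) else undefined) = hd (\<sigma> i) x p"
        proof (cases "x \<in> FO H X' \<and> p \<in> P' x")
          case True
          then show ?thesis using gQ[of x p] FMh'[of x] i inje unfolding \<pi>_def by (simp add: g_def)
        next
          case False then show ?thesis using \<sigma>ext[OF i False] by (simp only: if_False)
        qed
      qed
      show "Comp (ext_cat C H) c' (Q # L) (FO D i) (\<pi> i) h = \<sigma> i"
        unfolding h_def comm[OF i] list.sel using hh h'C[OF i] by (rule conjI)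
    qed
    have uniq: "h2 = h" if h2H: "h2 \<in> Hom (ext_cat C H) c' (Q # L)"
      and h2C: "\<forall>i\<in>Obj I. Comp (ext_cat C H) c' (Q # L) (FO D i) (\<pi> i) h2 = \<sigma> i" for h2
    proof -
      have ne: "h2 \<noteq> []" and t2: "tl h2 \<in> Hom C X' L"
        and hd2: "\<And>x p. x \<in> FO H X' \<Longrightarrow> p \<in> P' x \<Longrightarrow> hd h2 x p \<in> Q (FM H X' L (tl h2) x)"
        and ext2: "\<And>x p. \<not> (x \<in> FO H X' \<and> p \<in> P' x) \<Longrightarrow> hd h2 x p = undefined"
        using h2H unfolding ext_Hom by (auto simp: c'eq)
      have cm: "\<And>i. i \<in> Obj I \<Longrightarrow> (\<lambda>x p. if x \<in> FO H X' \<and> p \<in> P' x then hd (\<pi> i) (FM H X' L (tl h2) x) (hd h2 x p) else undefined) = hd (\<sigma> i)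
         \<and> Comp C X' L (tl (FO D i)) (\<pi>' i) (tl h2) = tl (\<sigma> i)"
        using h2C comm by blast
      have tleq: "tl h2 = h'" using h'u[OF t2] cm by blast
      have "hd h2 = g"
      proof (intro ext)
        fix x p
        show "hd h2 x p = g x p"
        proof (cases "x \<in> FO H X' \<and> p \<in> P' x")
          case True
          then have x: "x \<in> FO H X'" and p: "p \<in> P' x" by auto
          obtain r where r: "hd h2 x p = e r" "r \<in> PiE (Obj I) (\<lambda>i. hd (FO D i) (FM H L (tl (FO D i)) (\<pi>' i) (FM H X' L h' x)))"
            using Qe[OF FMh'[OF x] hd2[OF x p, unfolded tleq]] by blast
          have "r i = hd (\<sigma> i) x p" if i: "i \<in> Obj I" for i
          proof -
            have "hd (\<pi> i) (FM H X' L h' x) (hd h2 x p) = hd (\<sigma> i) x p"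
              using fun_cong[OF fun_cong[OF conjunct1[OF cm[OF i]], of x], of p] True tleq by simp
            then show ?thesis using r hd2[OF x p] FMh'[OF x] tleq inje unfolding \<pi>_def by simp
          qed
          then have "r = (\<lambda>i\<in>Obj I. hd (\<sigma> i) x p)" using r(2) by (auto simp: PiE_def extensional_def)
          then show ?thesis using r True by (simp add: g_def)
        next
          case False then show ?thesis using ext2[OF False] unfolding g_def by (simp only: if_False)
        qed
      qed
      then show ?thesis using ne tleq h_def by (metis list.collapse)
    qed
    show ?thesis using hH hC uniq by blast
  qed
  show "\<exists>c \<pi>. is_limit I (ext_cat C H) D c \<pi>"
    unfolding is_limit_def using cone univ by blast
qed

theorem mainTheorem1:
  fixes Hs :: "'u sfun list" and I :: "('i, 'j) cat"
  assumes "sort_signature Hs"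
    and "category I"
    and "\<exists>e :: ('i \<Rightarrow> 'u) \<Rightarrow> 'u. inj e"
  shows "has_limits_of_shape I (tower Hs)"
proof -
  obtain e :: "('i \<Rightarrow> 'u) \<Rightarrow> 'u" where e: "inj e" using assms(3) by blast
  show ?thesis using assms(1)
  proof (induction Hs rule: rev_induct)
    case Nil
    then show ?case using base_limits by (simp add: tower_def)
  next
    case (snoc H Hs)
    show ?case unfolding tower_snoc
      using step[OF sig_snoc(2)[OF snoc.prems] snoc.IH[OF sig_snoc(1)[OF snoc.prems]] e] .
  qed
qed

end
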